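(* Let $A\in\mathbb{R}^{m\times m}$ be symmetric, $B\in\mathbb{R}^{m\times k}$ with $k\le m$, and consider the quadratic problem on the Stiefel manifold $$\min_{W\in\mathbb{R}^{m\times k},\ W^TW=I_k} f(W),\qquad f(W)=\operatorname{Tr}(W^TAW-2W^TB).$$ Run the generalized power iteration method (GPI) described below. Then the algorithm decreases the value of $f$ monotonically in each iteration until it converges; that is, if $W$ is the current iterate and $\tilde{W}$ is the updated iterate, then $f(\tilde{W})\le f(W)$.
   Context: The generalized power iteration method (GPI) for this problem is: (1) Choose a constant $\alpha$ such that $\tilde{A}=\alpha I_m-A$ is positive definite, and choose an (arbitrary, e.g. random) initial $W\in\mathbb{R}^{m\times k}$ with $W^TW=I_k$. (2) Set $M\leftarrow 2\tilde{A}W+2B\in\mathbb{R}^{m\times k}$. (3) Compute a compact singular value decomposition $M=USV^T$ with $U\in\mathbb{R}^{m\times k}$ having orthonormal columns, $S\in\mathbb{R}^{k\times k}$ diagonal with nonnegative entries, and $V\in\mathbb{R}^{k\times k}$ orthogonal. (4) Update $W\leftarrow UV^T$. (5) Repeat steps (2)–(4) until convergence. $I_k$ denotes the $k\times k$ identity matrix and $\operatorname{Tr}$ the trace. *)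

theory Defs
  imports "HOL-Analysis.Analysis"
begin

definition stiefel_obj :: "real^'m^'m \<Rightarrow> real^'k^'m \<Rightarrow> real^'k^'m \<Rightarrow> real" where
  "stiefel_obj A B W = trace (transpose W ** A ** W - 2 *\<^sub>R (transpose W ** B))"

definition pos_def_mat :: "real^'n^'n \<Rightarrow> bool" where
  "pos_def_mat X \<longleftrightarrow> transpose X = X \<and> (\<forall>x. x \<noteq> 0 \<longrightarrow> x \<bullet> (X *v x) > 0)"

definition diagonal_mat :: "real^'n^'n \<Rightarrow> bool" where
  "diagonal_mat S \<longleftrightarrow> (\<forall>i j. i \<noteq> j \<longrightarrow> S $ i $ j = 0)"

end

theory Submission
  imports Defs
begin

lemma mm_sub_l: "(A::real^'n^'m) ** (B - C) = A ** B - A ** C"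
  by (simp add: matrix_matrix_mult_def vec_eq_iff sum_subtractf algebra_simps)
lemma mm_sub_r: "((A::real^'n^'m) - B) ** C = A ** C - B ** C"
  by (simp add: matrix_matrix_mult_def vec_eq_iff sum_subtractf algebra_simps)
lemma mm_add_r: "((A::real^'n^'m) + B) ** C = A ** C + B ** C"
  by (simp add: matrix_matrix_mult_def vec_eq_iff sum.distrib algebra_simps)
lemma mm_scale_l: "(k *\<^sub>R (A::real^'n^'m)) ** B = k *\<^sub>R (A ** B)"
  by (simp add: matrix_matrix_mult_def vec_eq_iff sum_distrib_left algebra_simps)
lemma mm_scale_r: "(A::real^'n^'m) ** (k *\<^sub>R B) = k *\<^sub>R (A ** B)"
  by (simp add: matrix_matrix_mult_def vec_eq_iff sum_distrib_left algebra_simps)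
lemma trace_scale: "trace (k *\<^sub>R (A::real^'n^'n)) = k * trace A"
  by (simp add: trace_def sum_distrib_left)
lemma trace_transp: "trace (transpose (A::real^'n^'n)) = trace A"
  by (simp add: trace_def transpose_def)
lemma transp_sub: "transpose ((A::real^'n^'m) - B) = transpose A - transpose B"
  by (simp add: transpose_def vec_eq_iff)

lemma trace_psd:
  fixes T :: "real^'m^'m" and D :: "real^'k^'m"
  assumes "pos_def_mat T"
  shows "0 \<le> trace (transpose D ** T ** D)"
proof -
  have eq: "trace (transpose D ** T ** D) = (\<Sum>j\<in>UNIV. column j D \<bullet> (T *v column j D))"
    by (simp add: trace_def matrix_matrix_mult_def matrix_vector_mult_def inner_vec_def
        column_def transpose_def sum_distrib_left sum_distrib_right algebra_simps)
       (rule sum.cong[OF refl], subst sum.swap, simp add: mult_ac)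
  have "\<And>j. 0 \<le> column j D \<bullet> (T *v column j D)"
    using assms unfolding pos_def_mat_def
    by (metis inner_zero_left less_eq_real_def)
  then show ?thesis unfolding eq by (simp add: sum_nonneg)
qed

lemma diag_entry_le1:
  fixes X Y :: "real^'k^'m"
  assumes "transpose X ** X = mat 1" "transpose Y ** Y = mat 1"
  shows "(transpose X ** Y) $ i $ i \<le> 1"
proof -
  have e: "(transpose X ** Y) $ i $ i = column i X \<bullet> column i Y"
    by (simp add: matrix_matrix_mult_def transpose_def column_def inner_vec_def)
  have nx: "column i X \<bullet> column i X = 1"
    using arg_cong[OF assms(1), of "\<lambda>M. M $ i $ i"]
    by (simp add: matrix_mult_transpose_dot_column mat_def)
  have ny: "column i Y \<bullet> column i Y = 1"
    using arg_cong[OF assms(2), of "\<lambda>M. M $ i $ i"]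
    by (simp add: matrix_mult_transpose_dot_column mat_def)
  have "norm (column i X) = 1" "norm (column i Y) = 1"
    using nx ny by (simp_all add: norm_eq_sqrt_inner)
  then have "column i X \<bullet> column i Y \<le> 1"
    by (metis mult_1 norm_cauchy_schwarz)
  then show ?thesis using e by simp
qed

theorem theorem2:
  fixes A :: "real^'m^'m" and B W U :: "real^'k^'m"
    and S V :: "real^'k^'k" and \<alpha> :: real
  assumes "transpose A = A"
    and "CARD('k) \<le> CARD('m)"
    and "pos_def_mat (\<alpha> *\<^sub>R mat 1 - A)"
    and "transpose W ** W = mat 1"
    and "2 *\<^sub>R ((\<alpha> *\<^sub>R mat 1 - A) ** W) + 2 *\<^sub>R B = U ** S ** transpose V"
    and "transpose U ** U = mat 1"
    and "diagonal_mat S" and "\<forall>i. S $ i $ i \<ge> 0"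
    and "orthogonal_matrix V"
  shows "stiefel_obj A B (U ** transpose V) \<le> stiefel_obj A B W"
proof -
  define T where "T = \<alpha> *\<^sub>R mat 1 - A"
  define Wt where "Wt = U ** transpose V"
  define M where "M = U ** S ** transpose V"
  have A_eq: "A = \<alpha> *\<^sub>R mat 1 - T" unfolding T_def by simp
  have Tsym: "transpose T = T" using assms(3) unfolding T_def pos_def_mat_def by simp
  have VtV: "transpose V ** V = mat 1" and VVt: "V ** transpose V = mat 1"
    using assms(9) unfolding orthogonal_matrix_def by auto
  have WtWt: "transpose Wt ** Wt = mat 1"
  proof -
    have "transpose Wt ** Wt = V ** (transpose U ** U) ** transpose V"
      unfolding Wt_def by (simp add: matrix_transpose_mul matrix_mul_assoc)
    then show ?thesis by (simp add: assms(6) VVt)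
  qed
  have fX: "stiefel_obj A B X = \<alpha> * trace (transpose X ** X) - trace (transpose X ** T ** X)
      - 2 * trace (transpose X ** B)" for X
    unfolding stiefel_obj_def A_eq
    by (simp add: mm_sub_l mm_sub_r mm_scale_l mm_scale_r trace_sub trace_scale matrix_mul_assoc)
  have Mdef: "M = 2 *\<^sub>R (T ** W) + 2 *\<^sub>R B" using assms(5) unfolding M_def T_def by simp
  have trM: "trace (transpose X ** M) = 2 * trace (transpose X ** T ** W) + 2 * trace (transpose X ** B)" for X :: "real^'k^'m"
    unfolding Mdef by (simp add: matrix_add_ldistrib mm_scale_r trace_add trace_scale matrix_mul_assoc)
  have psd: "0 \<le> trace (transpose (Wt - W) ** T ** (Wt - W))"
    using trace_psd assms(3) unfolding T_def by blast
  have sym: "trace (transpose W ** T ** Wt) = trace (transpose Wt ** T ** W)"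
  proof -
    have "transpose (transpose W ** T ** Wt) = transpose Wt ** T ** W"
      by (simp add: matrix_transpose_mul Tsym matrix_mul_assoc)
    then show ?thesis using trace_transp[of "transpose W ** T ** Wt"] by simp
  qed
  have exp: "trace (transpose (Wt - W) ** T ** (Wt - W)) =
     trace (transpose Wt ** T ** Wt) - 2 * trace (transpose Wt ** T ** W) + trace (transpose W ** T ** W)"
    using sym by (simp add: transp_sub mm_sub_l mm_sub_r trace_sub)
  have trWtM: "trace (transpose Wt ** M) = trace S"
  proof -
    have "transpose Wt ** M = V ** (transpose U ** U) ** S ** transpose V"
      unfolding Wt_def M_def by (simp add: matrix_transpose_mul matrix_mul_assoc)
    also have "\<dots> = V ** (S ** transpose V)" by (simp add: assms(6) matrix_mul_assoc)
    finally have "trace (transpose Wt ** M) = trace ((S ** transpose V) ** V)"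
      by (metis trace_mul_sym)
    also have "\<dots> = trace S" by (simp add: VtV flip: matrix_mul_assoc)
    finally show ?thesis .
  qed
  have trWM: "trace (transpose W ** M) \<le> trace S"
  proof -
    define P where "P = transpose V ** transpose W ** U"
    have "trace (transpose W ** M) = trace ((transpose W ** U) ** (S ** transpose V))"
      unfolding M_def by (simp add: matrix_mul_assoc)
    also have "\<dots> = trace ((S ** transpose V) ** (transpose W ** U))" by (rule trace_mul_sym)
    also have "\<dots> = trace (S ** P)" unfolding P_def by (simp add: matrix_mul_assoc)
    also have "\<dots> = (\<Sum>i\<in>UNIV. S $ i $ i * P $ i $ i)"
    proof -
      have "(S ** P) $ i $ i = S $ i $ i * P $ i $ i" for i
      proof -
        have "(S ** P) $ i $ i = (\<Sum>l\<in>UNIV. S $ i $ l * P $ l $ i)"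
          by (simp add: matrix_matrix_mult_def)
        also have "\<dots> = (\<Sum>l\<in>{i}. S $ i $ l * P $ l $ i)"
          using assms(7) unfolding diagonal_mat_def by (intro sum.mono_neutral_right) auto
        finally show ?thesis by simp
      qed
      then show ?thesis by (simp add: trace_def)
    qed
    also have "\<dots> \<le> (\<Sum>i\<in>UNIV. S $ i $ i)"
    proof (rule sum_mono)
      fix i
      have WV: "transpose (W ** V) ** (W ** V) = mat 1"
      proof -
        have "transpose (W ** V) ** (W ** V) = transpose V ** (transpose W ** W) ** V"
          by (simp add: matrix_transpose_mul matrix_mul_assoc)
        then show ?thesis by (simp add: assms(4) VtV)
      qed
      have "P = transpose (W ** V) ** U" unfolding P_def by (simp add: matrix_transpose_mul matrix_mul_assoc)
      then have "P $ i $ i \<le> 1" using diag_entry_le1[OF WV assms(6)] by simp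
      then show "S $ i $ i * P $ i $ i \<le> S $ i $ i"
        using assms(8) by (metis mult.right_neutral mult_left_mono)
    qed
    also have "\<dots> = trace S" by (simp add: trace_def)
    finally show ?thesis .
  qed
  have f1: "stiefel_obj A B Wt = \<alpha> * trace (mat 1 :: real^'k^'k) - trace (transpose Wt ** T ** Wt)
      - 2 * trace (transpose Wt ** B)" using fX[of Wt] WtWt by simp
  have f2: "stiefel_obj A B W = \<alpha> * trace (mat 1 :: real^'k^'k) - trace (transpose W ** T ** W)
      - 2 * trace (transpose W ** B)" using fX[of W] assms(4) by simp
  have "stiefel_obj A B Wt \<le> stiefel_obj A B W"
    using f1 f2 psd exp trWtM trWM trM[of Wt] trM[of W]
    by linarith
  then show ?thesis unfolding Wt_def .
qed

end
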